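(* Let $\alpha=(\alpha_1,\dots,\alpha_t)$ be palindromic (i.e. $\alpha_i=\alpha_{t+1-i}$ for all $i$) with $t$ odd, let $F=\breve F(\alpha)$ with elements $x_1,\dots,x_n$ and shared elements $s_1,\dots,s_{t-1}$. Assume that $\chi_{s_i}-\chi_{s_{t-i}}$ is $0$-mesic under rowmotion for all $i\in[t-1]$. Then (1) $\chi_{x_k}-\chi_{x_{n-k+1}}$ is $0$-mesic for all $k\in[n]$, and (2) $\hat\chi_{x_k}+\hat\chi_{x_{n-k+1}}$ is $1$-mesic for all $k\in[n]$.
   Context: A fence $\breve F(\alpha_1,\dots,\alpha_t)$ ($t\ge2$, positive integers, $\alpha_1,\alpha_t\ge2$) is the poset on $\{x_1,\dots,x_n\}$, $n=\alpha_1+\dots+\alpha_t-1$, with $a_i=\alpha_1+\dots+\alpha_i$, $a_0=0$, whose cover relations are: for $1\le j\le n-1$ with $a_{i-1}\le j<a_i$, $x_j\lessdot x_{j+1}$ if $i$ odd and $x_j\gtrdot x_{j+1}$ if $i$ even. Shared elements: $s_i=x_{a_i}$. $\mathcal J(F)$ is the set of order ideals; rowmotion $\rho:\mathcal J(F)\to\mathcal J(F)$ sends $I$ to the order ideal generated by $\min(F\setminus I)$. $\hat\chi_q(I)=1$ if $q\in I$, else 0; $\chi_q(I)=1$ if $q\in\max(I)$, else 0. A statistic $f:\mathcal J(F)\to\mathbb R$ is $c$-mesic under rowmotion if its average over every $\rho$-orbit equals $c$. *)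

theory Defs
  imports Complex_Main
begin

text \<open>A fence F(alpha_1,...,alpha_t) is encoded by the list alpha = [alpha_1,...,alpha_t].
  Its elements x_1..x_n are represented by the natural numbers 1..n.\<close>

definition is_fence_comp :: "nat list \<Rightarrow> bool" where
  "is_fence_comp \<alpha> \<longleftrightarrow> length \<alpha> \<ge> 2 \<and> (\<forall>a \<in> set \<alpha>. a > 0)
     \<and> hd \<alpha> \<ge> 2 \<and> last \<alpha> \<ge> 2"

definition fence_n :: "nat list \<Rightarrow> nat" where
  "fence_n \<alpha> = sum_list \<alpha> - 1"

text \<open>a_i = alpha_1 + ... + alpha_i; shared element s_i = x_{a_i}.\<close>
definition fence_a :: "nat list \<Rightarrow> nat \<Rightarrow> nat" where
  "fence_a \<alpha> i = sum_list (take i \<alpha>)"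

definition fence_elems :: "nat list \<Rightarrow> nat set" where
  "fence_elems \<alpha> = {1..fence_n \<alpha>}"

text \<open>Cover relations as pairs (lower, upper).\<close>
definition fence_cover :: "nat list \<Rightarrow> (nat \<times> nat) set" where
  "fence_cover \<alpha> =
     {(j, j + 1) | j i. 1 \<le> j \<and> j < fence_n \<alpha> \<and> 1 \<le> i \<and> i \<le> length \<alpha>
        \<and> fence_a \<alpha> (i - 1) \<le> j \<and> j < fence_a \<alpha> i \<and> odd i}
   \<union> {(j + 1, j) | j i. 1 \<le> j \<and> j < fence_n \<alpha> \<and> 1 \<le> i \<and> i \<le> length \<alpha>
        \<and> fence_a \<alpha> (i - 1) \<le> j \<and> j < fence_a \<alpha> i \<and> even i}"

definition fence_le :: "nat list \<Rightarrow> nat \<Rightarrow> nat \<Rightarrow> bool" where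
  "fence_le \<alpha> x y \<longleftrightarrow> (x, y) \<in> (fence_cover \<alpha>)\<^sup>*"

definition fence_ideals :: "nat list \<Rightarrow> nat set set" where
  "fence_ideals \<alpha> = {I. I \<subseteq> fence_elems \<alpha> \<and>
     (\<forall>x \<in> I. \<forall>y \<in> fence_elems \<alpha>. fence_le \<alpha> y x \<longrightarrow> y \<in> I)}"

definition fence_min :: "nat list \<Rightarrow> nat set \<Rightarrow> nat set" where
  "fence_min \<alpha> S = {x \<in> S. \<forall>y \<in> S. fence_le \<alpha> y x \<longrightarrow> y = x}"

definition fence_max :: "nat list \<Rightarrow> nat set \<Rightarrow> nat set" where
  "fence_max \<alpha> S = {x \<in> S. \<forall>y \<in> S. fence_le \<alpha> x y \<longrightarrow> y = x}"

definition rowmotion :: "nat list \<Rightarrow> nat set \<Rightarrow> nat set" where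
  "rowmotion \<alpha> I = {y \<in> fence_elems \<alpha>.
     \<exists>x \<in> fence_min \<alpha> (fence_elems \<alpha> - I). fence_le \<alpha> y x}"

definition row_orbit :: "nat list \<Rightarrow> nat set \<Rightarrow> nat set set" where
  "row_orbit \<alpha> I = {(rowmotion \<alpha> ^^ k) I | k. True}"

definition chi_hat :: "nat \<Rightarrow> nat set \<Rightarrow> real" where
  "chi_hat q I = (if q \<in> I then 1 else 0)"

definition chi :: "nat list \<Rightarrow> nat \<Rightarrow> nat set \<Rightarrow> real" where
  "chi \<alpha> q I = (if q \<in> fence_max \<alpha> I then 1 else 0)"

definition mesic :: "nat list \<Rightarrow> (nat set \<Rightarrow> real) \<Rightarrow> real \<Rightarrow> bool" where
  "mesic \<alpha> f c \<longleftrightarrow> (\<forall>I \<in> fence_ideals \<alpha>.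
     (\<Sum>J \<in> row_orbit \<alpha> I. f J) / real (card (row_orbit \<alpha> I)) = c)"

end

theory Submission
  imports Defs
begin


locale fc =
  fixes \<alpha> :: "nat list"
  assumes comp: "is_fence_comp \<alpha>"
begin

abbreviation "t \<equiv> length \<alpha>"
abbreviation "n \<equiv> fence_n \<alpha>"
abbreviation "a \<equiv> fence_a \<alpha>"
abbreviation "C \<equiv> fence_cover \<alpha>"
abbreviation "E \<equiv> fence_elems \<alpha>"
definition up :: "nat \<Rightarrow> bool" where "up j \<longleftrightarrow> (j, j+1) \<in> C"

lemma t_ge2: "t \<ge> 2" using comp by (simp add: is_fence_comp_def)
lemma pos: "i < t \<Longrightarrow> \<alpha> ! i > 0" using comp by (auto simp: is_fence_comp_def)
lemma a0: "a 0 = 0" by (simp add: fence_a_def)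
lemma a_Suc: "i < t \<Longrightarrow> a (Suc i) = a i + \<alpha> ! i"
  by (simp add: fence_a_def take_Suc_conv_app_nth)
lemma a_mono: "i \<le> i' \<Longrightarrow> a i \<le> a i'"
proof (induction i' rule: dec_induct)
  case (step m)
  show ?case
  proof (cases "m < t")
    case True then show ?thesis using step a_Suc[of m] by simp
  next
    case False then show ?thesis using step by (simp add: fence_a_def)
  qed
qed simp
lemma a_strict: "i < t \<Longrightarrow> a i < a (Suc i)" using a_Suc pos by simp
lemma a_t: "a t = sum_list \<alpha>" by (simp add: fence_a_def)
lemma ne: "\<alpha> \<noteq> []" using t_ge2 by auto
lemma hd_ge: "\<alpha> ! 0 \<ge> 2" using comp ne by (auto simp: is_fence_comp_def hd_conv_nth)
lemma last_ge: "\<alpha> ! (t - 1) \<ge> 2" using comp ne by (auto simp: is_fence_comp_def last_conv_nth)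
lemma a1: "a 1 = \<alpha> ! 0" using a_Suc[of 0] ne a0 by simp
lemma a_tm1: "a (t - 1) + \<alpha> ! (t - 1) = sum_list \<alpha>"
proof -
  have "Suc (t - 1) = t" using t_ge2 by simp
  then show ?thesis using a_Suc[of "t - 1"] t_ge2 a_t by simp
qed
lemma sum_ge: "sum_list \<alpha> \<ge> 4"
  using a_tm1 a_mono[of 1 "t - 1"] a1 hd_ge last_ge t_ge2 by linarith
lemma n_eq: "n + 1 = sum_list \<alpha>" using sum_ge by (simp add: fence_n_def)
lemma a_t': "a t = n + 1" using n_eq a_t by simp

lemma seg_ex: "j \<le> n \<Longrightarrow> \<exists>i. 1 \<le> i \<and> i \<le> t \<and> a (i - 1) \<le> j \<and> j < a i"
proof -
  assume j: "j \<le> n"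
  define i where "i = (LEAST i. j < a i)"
  have ex: "j < a t" using j a_t' by simp
  have 1: "j < a i" unfolding i_def by (rule LeastI, rule ex)
  have 2: "i \<le> t" unfolding i_def by (rule Least_le, rule ex)
  have 3: "i \<noteq> 0" using 1 a0 by (metis not_less0)
  have 4: "\<not> j < a (i - 1)" using 3 unfolding i_def
    by (metis diff_less less_numeral_extra(1) not_less_Least i_def 3 bot_nat_0.not_eq_extremum)
  show ?thesis using 1 2 3 4 by (intro exI[of _ i]) auto
qed

lemma seg_uniq:
  assumes "1 \<le> i" "a (i - 1) \<le> j" "j < a i" "1 \<le> i'" "a (i' - 1) \<le> j" "j < a i'"
  shows "i = i'"
proof (rule ccontr)
  assume "i \<noteq> i'"
  then have "i < i' \<or> i' < i" by auto
  then show False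
  proof
    assume "i < i'" then have "a i \<le> a (i' - 1)" by (intro a_mono) auto
    then show False using assms by linarith
  next
    assume "i' < i" then have "a i' \<le> a (i - 1)" by (intro a_mono) auto
    then show False using assms by linarith
  qed
qed

lemma cover_cases: "(x, y) \<in> C \<Longrightarrow> (y = x + 1 \<and> 1 \<le> x \<and> x < n) \<or> (x = y + 1 \<and> 1 \<le> y \<and> y < n)"
  by (auto simp: fence_cover_def)

lemma up_seg:
  assumes "1 \<le> i" "i \<le> t" "a (i - 1) \<le> j" "j < a i" "1 \<le> j" "j < n"
  shows "up j \<longleftrightarrow> odd i" and "(j + 1, j) \<in> C \<longleftrightarrow> even i"
proof -
  show "up j \<longleftrightarrow> odd i"
  proof
    assume "up j"
    then obtain i' where "1 \<le> i'" "a (i' - 1) \<le> j" "j < a i'" "odd i'"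
      unfolding up_def fence_cover_def by auto
    then show "odd i" using seg_uniq[of i j i'] assms by auto
  next
    assume "odd i" then show "up j" unfolding up_def fence_cover_def using assms by blast
  qed
  show "(j + 1, j) \<in> C \<longleftrightarrow> even i"
  proof
    assume "(j + 1, j) \<in> C"
    then obtain i' where "1 \<le> i'" "a (i' - 1) \<le> j" "j < a i'" "even i'"
      unfolding fence_cover_def by auto
    then show "even i" using seg_uniq[of i j i'] assms by auto
  next
    assume "even i" then show "(j + 1, j) \<in> C" unfolding fence_cover_def using assms by blast
  qed
qed

lemma down_iff: "(j + 1, j) \<in> C \<longleftrightarrow> 1 \<le> j \<and> j < n \<and> \<not> up j"
proof (cases "1 \<le> j \<and> j < n")
  case True
  then obtain i where "1 \<le> i \<and> i \<le> t \<and> a (i - 1) \<le> j \<and> j < a i" using seg_ex by force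
  then show ?thesis using up_seg[of i j] True by auto
next
  case False then show ?thesis using cover_cases by force
qed

lemma up_range: "up j \<Longrightarrow> 1 \<le> j \<and> j < n" unfolding up_def using cover_cases by force

lemma trancl_char: "(x, y) \<in> C\<^sup>+ \<Longrightarrow>
   (x < y \<and> (\<forall>j. x \<le> j \<and> j < y \<longrightarrow> up j)) \<or> (y < x \<and> (\<forall>j. y \<le> j \<and> j < x \<longrightarrow> \<not> up j))"
proof (induction rule: trancl_induct)
  case (base y)
  then show ?case using cover_cases[of x y] down_iff[of y] unfolding up_def
    by (metis le_antisym less_Suc_eq_le not_less_eq_eq  Suc_eq_plus1 lessI)
next
  case (step y z)
  from cover_cases[OF step(2)] have "(z = y + 1 \<and> up y) \<or> (y = z + 1 \<and> \<not> up z)"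
    using step(2) down_iff[of z] unfolding up_def by auto
  then show ?case using step(3)
  proof (elim disjE)
    assume h: "z = y + 1 \<and> up y" "x < y \<and> (\<forall>j. x \<le> j \<and> j < y \<longrightarrow> up j)"
    then show ?case by (metis Suc_eq_plus1 less_Suc_eq less_trans_Suc)
  next
    assume h: "z = y + 1 \<and> up y" "y < x \<and> (\<forall>j. y \<le> j \<and> j < x \<longrightarrow> \<not> up j)"
    then show ?case by auto
  next
    assume h: "y = z + 1 \<and> \<not> up z" "x < y \<and> (\<forall>j. x \<le> j \<and> j < y \<longrightarrow> up j)"
    then show ?case by auto
  next
    assume h: "y = z + 1 \<and> \<not> up z" "y < x \<and> (\<forall>j. y \<le> j \<and> j < x \<longrightarrow> \<not> up j)"
    then show ?case by (metis Suc_eq_plus1 Suc_lessD le_eq_less_or_eq less_eq_Suc_le)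
  qed
qed

lemma acyc: "acyclic C"
  unfolding acyclic_def using trancl_char by blast

lemma C_sub: "C \<subseteq> E \<times> E"
  using cover_cases by (fastforce simp: fence_elems_def)

lemma finC: "finite C"
  by (rule finite_subset[OF C_sub]) (simp add: fence_elems_def)

lemma wfC: "wf (C\<^sup>+)" using finite_acyclic_wf[OF finC acyc] wf_trancl by blast

end

context fc begin

abbreviation "rho \<equiv> rowmotion \<alpha>"
abbreviation "Ids \<equiv> fence_ideals \<alpha>"

lemma cover_ne: "(x, y) \<in> C \<Longrightarrow> x \<noteq> y" using cover_cases by force
lemma cover_E: "(x, y) \<in> C \<Longrightarrow> x \<in> E \<and> y \<in> E" using C_sub by blast

lemma ideal_sub: "I \<in> Ids \<Longrightarrow> I \<subseteq> E" by (simp add: fence_ideals_def)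
lemma ideal_down: "I \<in> Ids \<Longrightarrow> x \<in> I \<Longrightarrow> (y, x) \<in> C\<^sup>* \<Longrightarrow> y \<in> E \<Longrightarrow> y \<in> I"
  by (auto simp: fence_ideals_def fence_le_def)

lemma max_char: "I \<in> Ids \<Longrightarrow> y \<in> fence_max \<alpha> I \<longleftrightarrow> y \<in> I \<and> (\<forall>u. (y, u) \<in> C \<longrightarrow> u \<notin> I)"
proof
  assume I: "I \<in> Ids" and y: "y \<in> fence_max \<alpha> I"
  then show "y \<in> I \<and> (\<forall>u. (y, u) \<in> C \<longrightarrow> u \<notin> I)"
    unfolding fence_max_def fence_le_def using cover_ne by blast
next
  assume I: "I \<in> Ids" and h: "y \<in> I \<and> (\<forall>u. (y, u) \<in> C \<longrightarrow> u \<notin> I)"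
  show "y \<in> fence_max \<alpha> I" unfolding fence_max_def fence_le_def
  proof (safe)
    show "y \<in> I" using h by blast
  next
    fix z assume z: "z \<in> I" "(y, z) \<in> C\<^sup>*"
    show "z = y"
    proof (rule ccontr)
      assume "z \<noteq> y"
      then obtain w where w: "(y, w) \<in> C" "(w, z) \<in> C\<^sup>*" using z(2)
        by (metis converse_rtranclE)
      then have "w \<in> I" using ideal_down[OF I z(1) w(2)] cover_E by blast
      then show False using h w by blast
    qed
  qed
qed

lemma min_char: "I \<in> Ids \<Longrightarrow> y \<in> fence_min \<alpha> (E - I) \<longleftrightarrow> y \<in> E \<and> y \<notin> I \<and> (\<forall>l. (l, y) \<in> C \<longrightarrow> l \<in> I)"
proof
  assume I: "I \<in> Ids" and y: "y \<in> fence_min \<alpha> (E - I)"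
  then show "y \<in> E \<and> y \<notin> I \<and> (\<forall>l. (l, y) \<in> C \<longrightarrow> l \<in> I)"
    unfolding fence_min_def fence_le_def using cover_ne cover_E by blast
next
  assume I: "I \<in> Ids" and h: "y \<in> E \<and> y \<notin> I \<and> (\<forall>l. (l, y) \<in> C \<longrightarrow> l \<in> I)"
  show "y \<in> fence_min \<alpha> (E - I)" unfolding fence_min_def fence_le_def
  proof (safe)
    show "y \<in> E" using h by blast
    show "y \<in> I \<Longrightarrow> False" using h by blast
  next
    fix z assume z: "z \<in> E" "z \<notin> I" "(z, y) \<in> C\<^sup>*"
    show "z = y"
    proof (rule ccontr)
      assume "z \<noteq> y"
      then obtain w where w: "(z, w) \<in> C\<^sup>*" "(w, y) \<in> C" using z(3)
        by (metis rtranclE)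
      then have "w \<in> I" using h by blast
      then have "z \<in> I" using ideal_down[OF I _ w(1) z(1)] by blast
      then show False using z by blast
    qed
  qed
qed

lemma rho_ideal: "rho I \<in> Ids"
  unfolding fence_ideals_def rowmotion_def fence_le_def
  by (auto intro: rtrancl_trans)

lemma rho_max: "I \<in> Ids \<Longrightarrow> fence_max \<alpha> (rho I) = fence_min \<alpha> (E - I)"
proof (intro set_eqI iffI)
  fix y assume I: "I \<in> Ids" and y: "y \<in> fence_max \<alpha> (rho I)"
  then have yr: "y \<in> rho I" and ym: "\<forall>z \<in> rho I. fence_le \<alpha> y z \<longrightarrow> z = y"
    unfolding fence_max_def by auto
  from yr obtain m where m: "m \<in> fence_min \<alpha> (E - I)" "fence_le \<alpha> y m"
    unfolding rowmotion_def by auto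
  have "m \<in> rho I" using m unfolding rowmotion_def fence_min_def fence_le_def by auto
  then have "m = y" using ym m by blast
  then show "y \<in> fence_min \<alpha> (E - I)" using m by simp
next
  fix x assume I: "I \<in> Ids" and x: "x \<in> fence_min \<alpha> (E - I)"
  have xr: "x \<in> rho I" using x unfolding rowmotion_def fence_min_def fence_le_def by auto
  show "x \<in> fence_max \<alpha> (rho I)" unfolding fence_max_def
  proof (safe)
    show "x \<in> rho I" by (rule xr)
  next
    fix z assume z: "z \<in> rho I" "fence_le \<alpha> x z"
    from z(1) obtain m where m: "m \<in> fence_min \<alpha> (E - I)" "fence_le \<alpha> z m" "z \<in> E"
      unfolding rowmotion_def by auto
    have "fence_le \<alpha> x m" using z(2) m(2) unfolding fence_le_def by auto
    then have xm: "x = m" using m(1) x unfolding fence_min_def by auto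
    show "z = x"
    proof (cases "z \<in> I")
      case True
      then have "x \<in> I" using ideal_down[OF I True] z(2) x unfolding fence_le_def fence_min_def by auto
      then show ?thesis using x unfolding fence_min_def by auto
    next
      case False
      then show ?thesis using m xm x unfolding fence_min_def by auto
    qed
  qed
qed

lemma recover: "I \<in> Ids \<Longrightarrow> I = {y \<in> E. \<not> (\<exists>m \<in> fence_min \<alpha> (E - I). fence_le \<alpha> m y)}"
proof (intro set_eqI iffI)
  fix y assume I: "I \<in> Ids" and y: "y \<in> I"
  show "y \<in> {y \<in> E. \<not> (\<exists>m \<in> fence_min \<alpha> (E - I). fence_le \<alpha> m y)}"
    using y ideal_sub[OF I] ideal_down[OF I y] unfolding fence_min_def fence_le_def by blast
next
  fix y assume I: "I \<in> Ids" and y: "y \<in> {y \<in> E. \<not> (\<exists>m \<in> fence_min \<alpha> (E - I). fence_le \<alpha> m y)}"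
  show "y \<in> I"
  proof (rule ccontr)
    assume yI: "y \<notin> I"
    let ?Q = "{z \<in> E - I. (z, y) \<in> C\<^sup>*}"
    have "y \<in> ?Q" using y yI by auto
    have wm: "\<forall>Q x. x \<in> Q \<longrightarrow> (\<exists>z\<in>Q. \<forall>y. (y, z) \<in> C\<^sup>+ \<longrightarrow> y \<notin> Q)"
      using wfC by (rule wf_eq_minimal[THEN iffD1])
    obtain m where m: "m \<in> ?Q" and mm: "\<forall>w. (w, m) \<in> C\<^sup>+ \<longrightarrow> w \<notin> ?Q"
      using wm[rule_format, OF \<open>y \<in> ?Q\<close>] by blast
    have "m \<in> fence_min \<alpha> (E - I)" unfolding fence_min_def fence_le_def
    proof (safe)
      show "m \<in> E" "m \<in> I \<Longrightarrow> False" using m by auto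
    next
      fix w assume w: "w \<in> E" "w \<notin> I" "(w, m) \<in> C\<^sup>*"
      show "w = m"
      proof (rule ccontr)
        assume "w \<noteq> m"
        then have "(w, m) \<in> C\<^sup>+" using w(3) by (simp add: rtrancl_eq_or_trancl)
        moreover have "w \<in> ?Q" using w m by auto
        ultimately show False using mm by blast
      qed
    qed
    then show False using y m unfolding fence_le_def by auto
  qed
qed

lemma rho_inj: "I \<in> Ids \<Longrightarrow> J \<in> Ids \<Longrightarrow> rho I = rho J \<Longrightarrow> I = J"
proof -
  assume I: "I \<in> Ids" and J: "J \<in> Ids" and eq: "rho I = rho J"
  have m: "fence_min \<alpha> (E - I) = fence_min \<alpha> (E - J)" using rho_max[OF I] rho_max[OF J] eq by simp
  show "I = J" by (subst recover[OF I], subst recover[OF J], simp only: m)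
qed

lemma rhopow_ideal: "I \<in> Ids \<Longrightarrow> (rho ^^ k) I \<in> Ids"
  by (induction k) (auto simp: rho_ideal)

lemma rhopow_cancel: "I \<in> Ids \<Longrightarrow> J \<in> Ids \<Longrightarrow> (rho ^^ k) I = (rho ^^ k) J \<Longrightarrow> I = J"
proof (induction k)
  case (Suc k)
  have "rho ((rho ^^ k) I) = rho ((rho ^^ k) J)" using Suc.prems by simp
  then have "(rho ^^ k) I = (rho ^^ k) J" using rho_inj rhopow_ideal Suc.prems by blast
  then show ?case using Suc by blast
qed simp

lemma finIds: "finite Ids"
proof -
  have "Ids \<subseteq> Pow E" by (auto simp: fence_ideals_def)
  then show ?thesis by (rule finite_subset) (simp add: fence_elems_def)
qed

lemma period: "I \<in> Ids \<Longrightarrow> \<exists>p>0. (rho ^^ p) I = I"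
proof -
  assume I: "I \<in> Ids"
  let ?f = "\<lambda>k. (rho ^^ k) I"
  have "?f ` {..card Ids} \<subseteq> Ids" using rhopow_ideal[OF I] by auto
  then have "card (?f ` {..card Ids}) \<le> card Ids" using finIds card_mono by blast
  then have "\<not> inj_on ?f {..card Ids}" using card_image by fastforce
  then obtain x y where xy: "x \<le> card Ids" "y \<le> card Ids" "x \<noteq> y" "?f x = ?f y"
    unfolding inj_on_def by auto
  {
    fix x y assume "x < y" "?f x = ?f y"
    have "(rho ^^ x) ((rho ^^ (y - x)) I) = (rho ^^ (x + (y - x))) I" by (simp add: funpow_add)
    also have "\<dots> = (rho ^^ y) I" using \<open>x < y\<close> by simp
    finally have "(rho ^^ x) ((rho ^^ (y - x)) I) = (rho ^^ x) I" using \<open>?f x = ?f y\<close> by simp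
    then have "(rho ^^ (y - x)) I = I" using rhopow_cancel rhopow_ideal I by blast
    then have "\<exists>p>0. (rho ^^ p) I = I" using \<open>x < y\<close> by (intro exI[of _ "y - x"]) auto
  }
  then show ?thesis using xy by (metis linorder_neqE_nat)
qed

lemma orbit_props:
  assumes I: "I \<in> Ids"
  shows "finite (row_orbit \<alpha> I)" "row_orbit \<alpha> I \<noteq> {}" "row_orbit \<alpha> I \<subseteq> Ids"
    "rho ` row_orbit \<alpha> I = row_orbit \<alpha> I" "inj_on rho (row_orbit \<alpha> I)"
proof -
  show sub: "row_orbit \<alpha> I \<subseteq> Ids" unfolding row_orbit_def using rhopow_ideal[OF I] by auto
  show "finite (row_orbit \<alpha> I)" using finite_subset[OF sub finIds] .
  show "row_orbit \<alpha> I \<noteq> {}" unfolding row_orbit_def by auto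
  show "inj_on rho (row_orbit \<alpha> I)" using sub rho_inj unfolding inj_on_def by blast
  obtain p where p: "p > 0" "(rho ^^ p) I = I" using period[OF I] by blast
  show "rho ` row_orbit \<alpha> I = row_orbit \<alpha> I"
  proof
    show "rho ` row_orbit \<alpha> I \<subseteq> row_orbit \<alpha> I"
    proof
      fix X assume "X \<in> rho ` row_orbit \<alpha> I"
      then obtain k where "X = rho ((rho ^^ k) I)" unfolding row_orbit_def by auto
      then have "X = (rho ^^ Suc k) I" by simp
      then show "X \<in> row_orbit \<alpha> I" unfolding row_orbit_def by blast
    qed
  next
    show "row_orbit \<alpha> I \<subseteq> rho ` row_orbit \<alpha> I"
    proof
      fix X assume "X \<in> row_orbit \<alpha> I"
      then obtain k where X: "X = (rho ^^ k) I" unfolding row_orbit_def by auto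
      show "X \<in> rho ` row_orbit \<alpha> I"
      proof (cases k)
        case 0
        have "Suc (p - 1) = p" using p by simp
        then have "I = rho ((rho ^^ (p - 1)) I)" using p
          by (metis funpow.simps(2) o_apply)
        moreover have "(rho ^^ (p - 1)) I \<in> row_orbit \<alpha> I" unfolding row_orbit_def by blast
        ultimately show ?thesis using 0 X by auto
      next
        case (Suc m)
        then have "X = rho ((rho ^^ m) I)" using X by simp
        moreover have "(rho ^^ m) I \<in> row_orbit \<alpha> I" unfolding row_orbit_def by blast
        ultimately show ?thesis by blast
      qed
    qed
  qed
qed

lemma sum_rho: "I \<in> Ids \<Longrightarrow> (\<Sum>J \<in> row_orbit \<alpha> I. f (rho J)) = (\<Sum>J \<in> row_orbit \<alpha> I. f J)"
  using orbit_props[of I] sum.reindex[of rho "row_orbit \<alpha> I" f] by (simp add: o_def)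

end

context fc begin

definition upx :: "nat \<Rightarrow> bool" where "upx j \<longleftrightarrow> j = 0 \<or> j = n \<or> up j"
definition hh :: "nat \<Rightarrow> nat set \<Rightarrow> real" where
  "hh k J = (if k = 0 then 1 else if k = n + 1 then 0 else chi_hat k J)"

lemma ucov: "1 \<le> y \<Longrightarrow> y \<le> n \<Longrightarrow>
  (y, u) \<in> C \<longleftrightarrow> (u = y + 1 \<and> y < n \<and> up y) \<or> (u = y - 1 \<and> 1 < y \<and> \<not> up (y - 1))"
proof -
  assume y: "1 \<le> y" "y \<le> n"
  show ?thesis
  proof
    assume c: "(y, u) \<in> C"
    show "(u = y + 1 \<and> y < n \<and> up y) \<or> (u = y - 1 \<and> 1 < y \<and> \<not> up (y - 1))"
      using cover_cases[OF c] c down_iff[of u] unfolding up_def by auto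
  next
    assume "(u = y + 1 \<and> y < n \<and> up y) \<or> (u = y - 1 \<and> 1 < y \<and> \<not> up (y - 1))"
    then show "(y, u) \<in> C"
    proof
      assume "u = y + 1 \<and> y < n \<and> up y" then show ?thesis unfolding up_def by simp
    next
      assume h: "u = y - 1 \<and> 1 < y \<and> \<not> up (y - 1)"
      then have "(y - 1 + 1, y - 1) \<in> C" using down_iff[of "y - 1"] y by auto
      then show ?thesis using h by simp
    qed
  qed
qed

lemma lcov: "1 \<le> y \<Longrightarrow> y \<le> n \<Longrightarrow>
  (l, y) \<in> C \<longleftrightarrow> (l = y - 1 \<and> 1 < y \<and> up (y - 1)) \<or> (l = y + 1 \<and> y < n \<and> \<not> up y)"
proof -
  assume y: "1 \<le> y" "y \<le> n"
  show ?thesis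
  proof
    assume c: "(l, y) \<in> C"
    show "(l = y - 1 \<and> 1 < y \<and> up (y - 1)) \<or> (l = y + 1 \<and> y < n \<and> \<not> up y)"
      using cover_cases[OF c] c down_iff[of y] unfolding up_def by auto
  next
    assume "(l = y - 1 \<and> 1 < y \<and> up (y - 1)) \<or> (l = y + 1 \<and> y < n \<and> \<not> up y)"
    then show "(l, y) \<in> C"
    proof
      assume h: "l = y - 1 \<and> 1 < y \<and> up (y - 1)"
      then have "up (y - 1)" by blast
      then have "(y - 1, y - 1 + 1) \<in> C" unfolding up_def .
      moreover have "y - 1 + 1 = y" using h by simp
      ultimately show ?thesis using h by simp
    next
      assume h: "l = y + 1 \<and> y < n \<and> \<not> up y"
      then show ?thesis using down_iff[of y] y by auto
    qed
  qed
qed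

lemma hh_mid: "1 \<le> k \<Longrightarrow> k \<le> n \<Longrightarrow> hh k J = chi_hat k J" by (simp add: hh_def)

lemma chi_max: "J \<in> Ids \<Longrightarrow> chi \<alpha> y J = (if y \<in> J \<and> (\<forall>u. (y, u) \<in> C \<longrightarrow> u \<notin> J) then 1 else 0)"
  unfolding chi_def using max_char by simp

lemma chi_rho: "J \<in> Ids \<Longrightarrow> chi \<alpha> y (rho J) = (if y \<in> E \<and> y \<notin> J \<and> (\<forall>l. (l, y) \<in> C \<longrightarrow> l \<in> J) then 1 else 0)"
  unfolding chi_def using rho_max min_char by simp

lemma in_ideal_le: "J \<in> Ids \<Longrightarrow> (x, z) \<in> C \<Longrightarrow> z \<in> J \<Longrightarrow> x \<in> J"
  using ideal_down cover_E by blast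

lemma ptA:
  assumes J: "J \<in> Ids" and y: "1 \<le> y" "y \<le> n" and u1: "upx (y - 1)" and u2: "upx y"
  shows "chi \<alpha> y J = hh y J - hh (y + 1) J" "chi \<alpha> y (rho J) = hh (y - 1) J - hh y J"
proof -
  have e: "y \<in> E" using y by (simp add: fence_elems_def)
  have l1: "1 < y \<Longrightarrow> up (y - 1)" using u1 y by (auto simp: upx_def)
  have l2: "y < n \<Longrightarrow> up y" using u2 y by (auto simp: upx_def)
  have hy: "hh y J = chi_hat y J" using y by (simp add: hh_def)
  show "chi \<alpha> y J = hh y J - hh (y + 1) J"
  proof (cases "y < n")
    case True
    have U: "(y, u) \<in> C \<longleftrightarrow> u = y + 1" for u
      using ucov[OF y, of u] True l1 l2 by blast
    have h1: "hh (y + 1) J = chi_hat (y + 1) J" using True by (simp add: hh_def)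
    have "y + 1 \<in> J \<Longrightarrow> y \<in> J" using in_ideal_le[OF J, of y "y+1"] U by blast
    then show ?thesis unfolding chi_max[OF J] hy h1 chi_hat_def using U by auto
  next
    case False
    have U: "\<not> (y, u) \<in> C" for u
      using ucov[OF y, of u] False l1 by blast
    have h1: "hh (y + 1) J = 0" using False y by (simp add: hh_def)
    show ?thesis unfolding chi_max[OF J] hy h1 chi_hat_def using U by auto
  qed
  show "chi \<alpha> y (rho J) = hh (y - 1) J - hh y J"
  proof (cases "1 < y")
    case True
    have L: "(l, y) \<in> C \<longleftrightarrow> l = y - 1" for l
      using lcov[OF y, of l] True l1 l2 by blast
    have h1: "hh (y - 1) J = chi_hat (y - 1) J" proof -
      have "y - 1 \<noteq> 0" "y - 1 \<noteq> n + 1" using True y by arith+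
      then show ?thesis by (simp add: hh_def)
    qed
    have "y \<in> J \<Longrightarrow> y - 1 \<in> J" using in_ideal_le[OF J, of "y - 1" y] L by blast
    then show ?thesis unfolding chi_rho[OF J] hy h1 chi_hat_def using L e by auto
  next
    case False
    have L: "\<not> (l, y) \<in> C" for l
      using lcov[OF y, of l] False l2 by blast
    have h1: "hh (y - 1) J = 1" using False y by (simp add: hh_def)
    show ?thesis unfolding chi_rho[OF J] hy h1 chi_hat_def using L e by auto
  qed
qed

lemma ptB:
  assumes J: "J \<in> Ids" and y: "1 \<le> y" "y \<le> n" and u1: "\<not> upx (y - 1)" and u2: "\<not> upx y"
  shows "chi \<alpha> y J = hh y J - hh (y - 1) J" "chi \<alpha> y (rho J) = hh (y + 1) J - hh y J"
proof -
  have e: "y \<in> E" using y by (simp add: fence_elems_def)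
  have yy: "1 < y" "y < n" "\<not> up (y - 1)" "\<not> up y" using u1 u2 y by (auto simp: upx_def)
  have hy: "hh y J = chi_hat y J" using y by (simp add: hh_def)
  have h1: "hh (y - 1) J = chi_hat (y - 1) J" proof -
    have "y - 1 \<noteq> 0" "y - 1 \<noteq> n + 1" using yy by arith+
    then show ?thesis by (simp add: hh_def)
  qed
  have h2: "hh (y + 1) J = chi_hat (y + 1) J" using yy by (simp add: hh_def)
  have U: "(y, u) \<in> C \<longleftrightarrow> u = y - 1" for u
    using ucov[OF y, of u] yy by blast
  have L: "(l, y) \<in> C \<longleftrightarrow> l = y + 1" for l
    using lcov[OF y, of l] yy by blast
  have "y - 1 \<in> J \<Longrightarrow> y \<in> J" using in_ideal_le[OF J, of y "y - 1"] U by blast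
  then show "chi \<alpha> y J = hh y J - hh (y - 1) J" unfolding chi_max[OF J] hy h1 chi_hat_def using U by auto
  have "y \<in> J \<Longrightarrow> y + 1 \<in> J" using in_ideal_le[OF J, of "y + 1" y] L by blast
  then show "chi \<alpha> y (rho J) = hh (y + 1) J - hh y J" unfolding chi_rho[OF J] hy h2 chi_hat_def using L e by auto
qed

lemma ptC:
  assumes J: "J \<in> Ids" and y: "1 \<le> y" "y \<le> n" and u1: "upx (y - 1)" and u2: "\<not> upx y"
  shows "chi \<alpha> y J = hh y J"
proof -
  have yy: "y < n" "\<not> up y" using u2 y by (auto simp: upx_def)
  have l1: "1 < y \<Longrightarrow> up (y - 1)" using u1 y by (auto simp: upx_def)
  have hy: "hh y J = chi_hat y J" using y by (simp add: hh_def)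
  have U: "\<not> (y, u) \<in> C" for u using ucov[OF y, of u] yy l1 by blast
  show ?thesis unfolding chi_max[OF J] hy chi_hat_def using U by auto
qed

lemma ptD:
  assumes J: "J \<in> Ids" and y: "1 \<le> y" "y \<le> n" and u1: "\<not> upx (y - 1)" and u2: "upx y"
  shows "chi \<alpha> y (rho J) = 1 - hh y J"
proof -
  have e: "y \<in> E" using y by (simp add: fence_elems_def)
  have yy: "1 < y" "\<not> up (y - 1)" using u1 y by (auto simp: upx_def)
  have l2: "y < n \<Longrightarrow> up y" using u2 y by (auto simp: upx_def)
  have hy: "hh y J = chi_hat y J" using y by (simp add: hh_def)
  have L: "\<not> (l, y) \<in> C" for l using lcov[OF y, of l] yy l2 by blast
  show ?thesis unfolding chi_rho[OF J] hy chi_hat_def using L e by auto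
qed

end


lemma harm_le:
  fixes g :: "nat \<Rightarrow> real"
  assumes g0: "g 0 = 0" and gm: "g m = 0"
    and h: "\<forall>y. 0 < y \<and> y < m \<longrightarrow> g y = 0 \<or> 2 * g y = g (y - 1) + g (y + 1)"
    and y: "y \<le> m"
  shows "g y \<le> 0"
proof (rule ccontr)
  assume "\<not> g y \<le> 0"
  then have gy: "g y > 0" by simp
  define M where "M = Max (g ` {..m})"
  have fin: "finite (g ` {..m})" by simp
  have Mge: "z \<le> m \<Longrightarrow> g z \<le> M" for z unfolding M_def using fin by (intro Max_ge) auto
  have "M \<in> g ` {..m}" unfolding M_def using fin by (intro Max_in) auto
  then obtain z where z: "z \<le> m" "g z = M" by auto
  define y0 where "y0 = (LEAST z. z \<le> m \<and> g z = M)"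
  have y0: "y0 \<le> m \<and> g y0 = M" unfolding y0_def by (rule LeastI[of _ z]) (use z in auto)
  have Mpos: "M > 0" using Mge[OF y] gy by simp
  have "y0 \<noteq> 0"
  proof
    assume "y0 = 0" then have "g y0 = 0" using g0 by simp
    then show False using y0 Mpos by simp
  qed
  moreover have "y0 \<noteq> m" using y0 gm Mpos by auto
  ultimately have r: "0 < y0" "y0 < m" using y0 by auto
  have "g y0 \<noteq> 0" using y0 Mpos by simp
  then have eq: "2 * M = g (y0 - 1) + g (y0 + 1)" using h r y0 by auto
  have "g (y0 - 1) \<noteq> M"
  proof
    assume a1: "g (y0 - 1) = M"
    have "y0 - 1 \<le> m" using r by simp
    then have "(LEAST z. z \<le> m \<and> g z = M) \<le> y0 - 1" using a1 by (intro Least_le) simp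
    then have "y0 \<le> y0 - 1" unfolding y0_def[symmetric] .
    then show False using r by simp
  qed
  then have "g (y0 - 1) < M" using Mge[of "y0 - 1"] r by force
  moreover have "g (y0 + 1) \<le> M" using Mge[of "y0 + 1"] r by simp
  ultimately show False using eq by simp
qed

lemma harm_zero:
  fixes g :: "nat \<Rightarrow> real"
  assumes g0: "g 0 = 0" and gm: "g m = 0"
    and h: "\<forall>y. 0 < y \<and> y < m \<longrightarrow> g y = 0 \<or> 2 * g y = g (y - 1) + g (y + 1)"
    and y: "y \<le> m"
  shows "g y = 0"
proof -
  have "g y \<le> 0" using harm_le[OF g0 gm h y] .
  moreover have "(\<lambda>k. - g k) y \<le> 0"
    by (rule harm_le[where m = m]) (use g0 gm h y in auto)
  ultimately show ?thesis by simp
qed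

context fc begin

lemma rev_pal:
  assumes pal: "\<forall>i < t. \<alpha> ! i = \<alpha> ! (t - 1 - i)"
  shows "rev \<alpha> = \<alpha>"
proof (rule nth_equalityI)
  show "length (rev \<alpha>) = length \<alpha>" by simp
  fix i assume "i < length (rev \<alpha>)"
  then have i: "i < t" by simp
  have "rev \<alpha> ! i = \<alpha> ! (t - Suc i)" using rev_nth[OF i] .
  also have "\<dots> = \<alpha> ! i" using pal i by (metis diff_diff_left plus_1_eq_Suc)
  finally show "rev \<alpha> ! i = \<alpha> ! i" .
qed

lemma a_sym:
  assumes pal: "\<forall>i < t. \<alpha> ! i = \<alpha> ! (t - 1 - i)" and i: "i \<le> t"
  shows "a (t - i) + a i = n + 1"
proof -
  have "drop (t - i) \<alpha> = drop (t - i) (rev \<alpha>)" using rev_pal[OF pal] by simp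
  also have "\<dots> = rev (take (t - (t - i)) \<alpha>)" by (rule drop_rev)
  also have "t - (t - i) = i" using i by simp
  finally have d: "drop (t - i) \<alpha> = rev (take i \<alpha>)" .
  have "sum_list \<alpha> = sum_list (take (t - i) \<alpha>) + sum_list (drop (t - i) \<alpha>)"
    by (simp only: sum_list_append[symmetric] append_take_drop_id)
  then show ?thesis using d n_eq by (simp add: fence_a_def)
qed

lemma up_sym:
  assumes pal: "\<forall>i < t. \<alpha> ! i = \<alpha> ! (t - 1 - i)" and ot: "odd t"
    and j: "1 \<le> j" "j < n"
  shows "up j \<longleftrightarrow> up (n - j)"
proof -
  obtain i where i: "1 \<le> i" "i \<le> t" "a (i - 1) \<le> j" "j < a i" using seg_ex[of j] j by auto
  define i' where "i' = t + 1 - i"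
  have i': "1 \<le> i'" "i' \<le> t" using i unfolding i'_def by auto
  have s1: "a (t - i) + a i = n + 1" using a_sym[OF pal, of i] i by simp
  have s2: "a (t - (i - 1)) + a (i - 1) = n + 1" using a_sym[OF pal, of "i - 1"] i by simp
  have e1: "i' - 1 = t - i" unfolding i'_def using i by simp
  have e2: "i' = t - (i - 1)" unfolding i'_def using i by simp
  have b1: "a (i' - 1) \<le> n - j" using s1 i e1 by simp
  have b2: "n - j < a i'" using s2 i e2 j by simp
  have "up (n - j) \<longleftrightarrow> odd i'" using up_seg(1)[OF i' b1 b2] j by simp
  moreover have "up j \<longleftrightarrow> odd i" using up_seg(1)[OF i(1,2,3,4)] j by simp
  moreover have "odd i' \<longleftrightarrow> odd i"
  proof -
    have "i' + i = t + 1" unfolding i'_def using i by simp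
    moreover have "even (t + 1)" using ot by simp
    ultimately have "even (i' + i)" by metis
    then show ?thesis by simp
  qed
  ultimately show ?thesis by simp
qed

lemma upx_sym:
  assumes pal: "\<forall>i < t. \<alpha> ! i = \<alpha> ! (t - 1 - i)" and ot: "odd t" and j: "j \<le> n"
  shows "upx j \<longleftrightarrow> upx (n - j)"
proof (cases "j = 0 \<or> j = n")
  case True then show ?thesis using j by (auto simp: upx_def)
next
  case False
  then have jj: "1 \<le> j" "j < n" using j by auto
  have "n - j \<noteq> 0" "n - j \<noteq> n" using jj by auto
  then have "upx (n - j) = up (n - j)" "upx j = up j" using False by (simp_all add: upx_def)
  then show ?thesis using up_sym[OF pal ot jj] by simp
qed

lemma n_ge: "n \<ge> 3"
proof -
  have "a 1 \<le> a (t - 1)" using t_ge2 by (intro a_mono) simp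
  then show ?thesis using a_tm1 a1 hd_ge last_ge n_eq by linarith
qed

lemma up1: "up 1"
proof -
  have h: "a (1 - 1) \<le> 1" "1 < a 1" using a0 a1 hd_ge by auto
  have "(1::nat) \<le> 1" "1 \<le> t" "1 < n" using t_ge2 n_ge by auto
  then have "up 1 \<longleftrightarrow> odd (1::nat)" using up_seg(1)[OF _ _ h] by blast
  then show ?thesis by simp
qed

lemma upx1: "upx 1" using up1 by (simp add: upx_def)

lemma shared:
  assumes y: "1 < y" "y < n" and d: "upx (y - 1) \<noteq> upx y"
  shows "\<exists>i. 1 \<le> i \<and> i \<le> t - 1 \<and> a i = y"
proof -
  have "y - 1 \<le> n" using y by simp
  then obtain i where i: "1 \<le> i" "i \<le> t" "a (i - 1) \<le> y - 1" "y - 1 < a i" using seg_ex[of "y - 1"] by blast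
  have d': "up (y - 1) \<noteq> up y" using d y by (auto simp: upx_def)
  have "up (y - 1) \<longleftrightarrow> odd i" using up_seg(1)[OF i] y by simp
  have "a i = y"
  proof (rule ccontr)
    assume "a i \<noteq> y"
    then have "y < a i" using i by simp
    then have "up y \<longleftrightarrow> odd i" using up_seg(1)[of i y] i y by simp
    then show False using d' \<open>up (y - 1) \<longleftrightarrow> odd i\<close> by simp
  qed
  moreover have "i \<noteq> t" using \<open>a i = y\<close> a_t' y by auto
  ultimately show ?thesis using i by (intro exI[of _ i]) auto
qed

end

context fc begin

lemma orbit_main:
  assumes pal: "\<forall>i < t. \<alpha> ! i = \<alpha> ! (t - 1 - i)" and ot: "odd t"
    and hyp: "\<forall>i \<in> {1..t - 1}. mesic \<alpha> (\<lambda>I. chi \<alpha> (a i) I - chi \<alpha> (a (t - i)) I) 0"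
    and I: "I \<in> Ids" and k: "1 \<le> k" "k \<le> n"
  shows "(\<Sum>J\<in>row_orbit \<alpha> I. chi \<alpha> k J) = (\<Sum>J\<in>row_orbit \<alpha> I. chi \<alpha> (n + 1 - k) J)
    \<and> (\<Sum>J\<in>row_orbit \<alpha> I. chi_hat k J) + (\<Sum>J\<in>row_orbit \<alpha> I. chi_hat (n + 1 - k) J) = real (card (row_orbit \<alpha> I))"
proof -
  define Orb where "Orb = row_orbit \<alpha> I"
  define N where "N = real (card Orb)"
  define h where "h k = (\<Sum>J\<in>Orb. hh k J)" for k
  define c where "c y = (\<Sum>J\<in>Orb. chi \<alpha> y J)" for y
  have Osub: "Orb \<subseteq> Ids" and Ofin: "finite Orb" and Ne: "Orb \<noteq> {}"
    using orbit_props[OF I] unfolding Orb_def by auto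
  have Npos: "N > 0" unfolding N_def using Ofin Ne by (simp add: card_gt_0_iff)
  have h0: "h 0 = N" by (simp add: h_def hh_def N_def)
  have hn: "h (n + 1) = 0" by (simp add: h_def hh_def)
  have crho: "c y = (\<Sum>J\<in>Orb. chi \<alpha> y (rho J))" for y
    using sum_rho[OF I, of "chi \<alpha> y"] unfolding c_def Orb_def by simp
  have cA: "c y = h y - h (y + 1) \<and> c y = h (y - 1) - h y"
    if y: "1 \<le> y" "y \<le> n" and u: "upx (y - 1)" "upx y" for y
  proof
    have "c y = (\<Sum>J\<in>Orb. hh y J - hh (y + 1) J)" unfolding c_def
      using ptA(1)[OF _ y u] Osub by (intro sum.cong) auto
    then show "c y = h y - h (y + 1)" by (simp add: h_def sum_subtractf)
    have "c y = (\<Sum>J\<in>Orb. hh (y - 1) J - hh y J)" unfolding crho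
      using ptA(2)[OF _ y u] Osub by (intro sum.cong) auto
    then show "c y = h (y - 1) - h y" by (simp add: h_def sum_subtractf)
  qed
  have cB: "c y = h y - h (y - 1) \<and> c y = h (y + 1) - h y"
    if y: "1 \<le> y" "y \<le> n" and u: "\<not> upx (y - 1)" "\<not> upx y" for y
  proof
    have "c y = (\<Sum>J\<in>Orb. hh y J - hh (y - 1) J)" unfolding c_def
      using ptB(1)[OF _ y u] Osub by (intro sum.cong) auto
    then show "c y = h y - h (y - 1)" by (simp add: h_def sum_subtractf)
    have "c y = (\<Sum>J\<in>Orb. hh (y + 1) J - hh y J)" unfolding crho
      using ptB(2)[OF _ y u] Osub by (intro sum.cong) auto
    then show "c y = h (y + 1) - h y" by (simp add: h_def sum_subtractf)
  qed
  have cC: "c y = h y"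
    if y: "1 \<le> y" "y \<le> n" and u: "upx (y - 1)" "\<not> upx y" for y
  proof -
    have "c y = (\<Sum>J\<in>Orb. hh y J)" unfolding c_def
      using ptC[OF _ y u] Osub by (intro sum.cong) auto
    then show ?thesis by (simp add: h_def)
  qed
  have cD: "c y = N - h y"
    if y: "1 \<le> y" "y \<le> n" and u: "\<not> upx (y - 1)" "upx y" for y
  proof -
    have "c y = (\<Sum>J\<in>Orb. 1 - hh y J)" unfolding crho
      using ptD[OF _ y u] Osub by (intro sum.cong) auto
    then show ?thesis by (simp add: h_def sum_subtractf N_def)
  qed
  have hypc: "c (a i) = c (a (t - i))" if i: "1 \<le> i" "i \<le> t - 1" for i
  proof -
    have "mesic \<alpha> (\<lambda>I. chi \<alpha> (a i) I - chi \<alpha> (a (t - i)) I) 0" using hyp i by auto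
    then have "(\<Sum>J\<in>Orb. chi \<alpha> (a i) J - chi \<alpha> (a (t - i)) J) / N = 0"
      unfolding mesic_def Orb_def N_def using I by blast
    then have "(\<Sum>J\<in>Orb. chi \<alpha> (a i) J - chi \<alpha> (a (t - i)) J) = 0" using Npos by simp
    then show ?thesis unfolding c_def by (simp add: sum_subtractf)
  qed
  have cshared: "c y = c (n + 1 - y)" if y: "1 < y" "y < n" "upx (y - 1) \<noteq> upx y" for y
  proof -
    obtain i where i: "1 \<le> i" "i \<le> t - 1" "a i = y" using shared[OF y] by blast
    have "a (t - i) + a i = n + 1" using a_sym[OF pal, of i] i by simp
    then have "a (t - i) = n + 1 - y" using i by simp
    then show ?thesis using hypc[OF i(1,2)] i(3) by simp
  qed
  have sym1: "upx (n + 1 - y - 1) = upx y" if "1 \<le> y" "y \<le> n" for y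
  proof -
    have "n + 1 - y - 1 = n - y" by simp
    then show ?thesis using upx_sym[OF pal ot, of y] that by simp
  qed
  have sym2: "upx (n + 1 - y) = upx (y - 1)" if "1 \<le> y" "y \<le> n" for y
  proof -
    have "n + 1 - y = n - (y - 1)" using that by simp
    then show ?thesis using upx_sym[OF pal ot, of "y - 1"] that by simp
  qed
  have upxn1: "upx (n - 1)"
  proof -
    have "n - (n - 1) = 1" "n - 1 \<le> n" using n_ge by auto
    then show ?thesis using upx_sym[OF pal ot, of "n - 1"] upx1 by simp
  qed
  define g where "g k = h k + h (n + 1 - k) - N" for k
  have gharm: "\<forall>y. 0 < y \<and> y < n + 1 \<longrightarrow> g y = 0 \<or> 2 * g y = g (y - 1) + g (y + 1)"
  proof (intro allI impI)
    fix y assume "0 < y \<and> y < n + 1"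
    then have y: "1 \<le> y" "y \<le> n" by auto
    define y' where "y' = n + 1 - y"
    have y': "1 \<le> y'" "y' \<le> n" using y unfolding y'_def by auto
    have s1: "upx (y' - 1) = upx y" unfolding y'_def using sym1[OF y] .
    have s2: "upx y' = upx (y - 1)" unfolding y'_def using sym2[OF y] .
    have e1: "n + 1 - (y - 1) = y' + 1" unfolding y'_def using y by simp
    have e2: "n + 1 - (y + 1) = y' - 1" unfolding y'_def using y by simp
    show "g y = 0 \<or> 2 * g y = g (y - 1) + g (y + 1)"
    proof (cases "upx (y - 1) = upx y")
      case True
      have H2: "h (y - 1) + h (y + 1) = 2 * h y \<and> h (y' - 1) + h (y' + 1) = 2 * h y'"
      proof (cases "upx y")
        case True2: True
        then have u: "upx (y - 1)" "upx y" "upx (y' - 1)" "upx y'" using True s1 s2 by auto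
        show ?thesis using cA[OF y u(1,2)] cA[OF y' u(3,4)] by linarith
      next
        case False2: False
        then have u: "\<not> upx (y - 1)" "\<not> upx y" "\<not> upx (y' - 1)" "\<not> upx y'" using True s1 s2 by auto
        show ?thesis using cB[OF y u(1,2)] cB[OF y' u(3,4)] by linarith
      qed
      have "2 * g y = g (y - 1) + g (y + 1)"
        using conjunct1[OF H2] conjunct2[OF H2] unfolding g_def e1 e2 y'_def[symmetric] by (smt (verit))
      then show ?thesis by blast
    next
      case False
      have y1: "1 < y"
      proof (rule ccontr)
        assume "\<not> 1 < y" then have "y = 1" using y by simp
        then show False using False upx1 by (simp add: upx_def)
      qed
      have y2: "y < n"
      proof (rule ccontr)
        assume "\<not> y < n" then have "y = n" using y by simp
        then show False using False upxn1 by (simp add: upx_def)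
      qed
      have cc: "c y = c y'" using cshared[OF y1 y2 False] unfolding y'_def .
      have "g y = 0"
      proof (cases "upx y")
        case True
        then have u: "\<not> upx (y - 1)" "upx y" "upx (y' - 1)" "\<not> upx y'" using False s1 s2 by auto
        show ?thesis using cD[OF y u(1,2)] cC[OF y' u(3,4)] cc unfolding g_def y'_def[symmetric] by linarith
      next
        case False3: False
        then have u: "upx (y - 1)" "\<not> upx y" "\<not> upx (y' - 1)" "upx y'" using False s1 s2 by auto
        show ?thesis using cC[OF y u(1,2)] cD[OF y' u(3,4)] cc unfolding g_def y'_def[symmetric] by linarith
      qed
      then show ?thesis by blast
    qed
  qed
  have g0: "g 0 = 0" unfolding g_def using h0 hn by simp
  have gm: "g (n + 1) = 0" unfolding g_def using h0 hn by simp
  have gz: "g z = 0" if "z \<le> n + 1" for z using harm_zero[OF g0 gm gharm that] .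
  define k' where "k' = n + 1 - k"
  have k': "1 \<le> k'" "k' \<le> n" using k unfolding k'_def by auto
  have hk: "h k + h k' = N" using gz[of k] k unfolding g_def k'_def by simp
  have part2: "(\<Sum>J\<in>Orb. chi_hat k J) + (\<Sum>J\<in>Orb. chi_hat k' J) = N"
  proof -
    have "(\<Sum>J\<in>Orb. chi_hat k J) = h k" unfolding h_def using k by (simp add: hh_mid)
    moreover have "(\<Sum>J\<in>Orb. chi_hat k' J) = h k'" unfolding h_def using k' by (simp add: hh_mid)
    ultimately show ?thesis using hk by simp
  qed
  have s1: "upx (k' - 1) = upx k" unfolding k'_def using sym1[OF k] .
  have s2: "upx k' = upx (k - 1)" unfolding k'_def using sym2[OF k] .
  have hk1: "h (k + 1) + h (k' - 1) = N"
  proof -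
    have "n + 1 - (k + 1) = k' - 1" unfolding k'_def using k by simp
    then show ?thesis using gz[of "k + 1"] k unfolding g_def by simp
  qed
  have hk2: "h (k - 1) + h (k' + 1) = N"
  proof -
    have "n + 1 - (k - 1) = k' + 1" unfolding k'_def using k by simp
    then show ?thesis using gz[of "k - 1"] k unfolding g_def by simp
  qed
  have part1: "c k = c k'"
  proof (cases "upx (k - 1) = upx k")
    case True
    show ?thesis
    proof (cases "upx k")
      case True2: True
      then have u: "upx (k - 1)" "upx k" "upx (k' - 1)" "upx k'" using True s1 s2 by auto
      show ?thesis using cA[OF k u(1,2)] cA[OF k' u(3,4)] hk hk1 by linarith
    next
      case False2: False
      then have u: "\<not> upx (k - 1)" "\<not> upx k" "\<not> upx (k' - 1)" "\<not> upx k'" using True s1 s2 by auto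
      show ?thesis using cB[OF k u(1,2)] cB[OF k' u(3,4)] hk hk2 by linarith
    qed
  next
    case False
    have y1: "1 < k"
    proof (rule ccontr)
      assume "\<not> 1 < k" then have "k = 1" using k by simp
      then show False using False upx1 by (simp add: upx_def)
    qed
    have y2: "k < n"
    proof (rule ccontr)
      assume "\<not> k < n" then have "k = n" using k by simp
      then show False using False upxn1 by (simp add: upx_def)
    qed
    show ?thesis using cshared[OF y1 y2 False] unfolding k'_def .
  qed
  show ?thesis using part1 part2 unfolding c_def Orb_def N_def k'_def by simp
qed

lemma main:
  assumes pal: "\<forall>i < t. \<alpha> ! i = \<alpha> ! (t - 1 - i)" and ot: "odd t"
    and hyp: "\<forall>i \<in> {1..t - 1}. mesic \<alpha> (\<lambda>I. chi \<alpha> (a i) I - chi \<alpha> (a (t - i)) I) 0"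
  shows "(\<forall>k \<in> {1..n}. mesic \<alpha> (\<lambda>I. chi \<alpha> k I - chi \<alpha> (n - k + 1) I) 0)
       \<and> (\<forall>k \<in> {1..n}. mesic \<alpha> (\<lambda>I. chi_hat k I + chi_hat (n - k + 1) I) 1)"
proof (intro conjI ballI)
  fix k assume k: "k \<in> {1..n}"
  then have k1: "1 \<le> k" "k \<le> n" by auto
  have e: "n - k + 1 = n + 1 - k" using k1 by simp
  show "mesic \<alpha> (\<lambda>I. chi \<alpha> k I - chi \<alpha> (n - k + 1) I) 0"
    unfolding mesic_def e
  proof
    fix I assume I: "I \<in> Ids"
    show "(\<Sum>J\<in>row_orbit \<alpha> I. chi \<alpha> k J - chi \<alpha> (n + 1 - k) J) / real (card (row_orbit \<alpha> I)) = 0"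
      using orbit_main[OF pal ot hyp I k1] by (simp add: sum_subtractf)
  qed
  show "mesic \<alpha> (\<lambda>I. chi_hat k I + chi_hat (n - k + 1) I) 1"
    unfolding mesic_def e
  proof
    fix I assume I: "I \<in> Ids"
    have "card (row_orbit \<alpha> I) > 0" using orbit_props[OF I] by (simp add: card_gt_0_iff)
    then show "(\<Sum>J\<in>row_orbit \<alpha> I. chi_hat k J + chi_hat (n + 1 - k) J) / real (card (row_orbit \<alpha> I)) = 1"
      using orbit_main[OF pal ot hyp I k1] by (simp add: sum.distrib)
  qed
qed

end

theorem theorem5p9:
  fixes \<alpha> :: "nat list"
  assumes "is_fence_comp \<alpha>"
    and "\<forall>i < length \<alpha>. \<alpha> ! i = \<alpha> ! (length \<alpha> - 1 - i)"
    and "odd (length \<alpha>)"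
    and "\<forall>i \<in> {1..length \<alpha> - 1}.
           mesic \<alpha> (\<lambda>I. chi \<alpha> (fence_a \<alpha> i) I - chi \<alpha> (fence_a \<alpha> (length \<alpha> - i)) I) 0"
  shows "(\<forall>k \<in> {1..fence_n \<alpha>}.
            mesic \<alpha> (\<lambda>I. chi \<alpha> k I - chi \<alpha> (fence_n \<alpha> - k + 1) I) 0)
       \<and> (\<forall>k \<in> {1..fence_n \<alpha>}.
            mesic \<alpha> (\<lambda>I. chi_hat k I + chi_hat (fence_n \<alpha> - k + 1) I) 1)"
proof -
  interpret fc \<alpha> by unfold_locales (rule assms(1))
  show ?thesis using main[OF assms(2,3,4)] .
qed


end
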